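(* Assume the capacities satisfy (C1). Let $M_0$ be uniform on $\{1,\dots,N\}$ and $M_1,M_2,\dots$ i.i.d., independent of $M_0$, with $\mathbb P(M_v=m)=\lambda_m/l_N$, $1\le m\le N$, and set $Y_v=\mathbf 1\{\bigcup_{w=0}^{v-1}\{M_v=M_w\}\}$ for $v\ge1$. Then for each $\delta\in(-1/2,1/2)$, $u\ge0$ and $v\le N^{1/2+\delta}$, $$\mathbb P\Big(\sum_{w=1}^vY_w\ge N^u\Big)=O\big(N^{-(u-2\delta)}\big).$$
   Context: Capacities $\lambda_1,\dots,\lambda_N>0$ deterministic; $l_N=\sum_i\lambda_i$, $\mu_N=\frac1N\sum_i\lambda_i$, $\nu_N=\sum_i\lambda_i^2/\sum_i\lambda_i$. (C1): there are $\mu\in(0,\infty)$, $\nu\in(1,\infty)$, $\alpha_1>0$ with $|\mu_N-\mu|=O(N^{-\alpha_1})$ and $|\nu_N-\nu|=O(N^{-\alpha_1})$. *)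

theory Defs
  imports "HOL-Probability.Probability" "HOL-Library.Landau_Symbols"
begin

text \<open>Capacities: lam N i is the capacity of node i (1 \<le> i \<le> N) in the system of size N.\<close>

definition l_N :: "(nat \<Rightarrow> nat \<Rightarrow> real) \<Rightarrow> nat \<Rightarrow> real" where
  "l_N lam N = (\<Sum>i=1..N. lam N i)"

definition mu_N :: "(nat \<Rightarrow> nat \<Rightarrow> real) \<Rightarrow> nat \<Rightarrow> real" where
  "mu_N lam N = l_N lam N / real N"

definition nu_N :: "(nat \<Rightarrow> nat \<Rightarrow> real) \<Rightarrow> nat \<Rightarrow> real" where
  "nu_N lam N = (\<Sum>i=1..N. (lam N i)\<^sup>2) / l_N lam N"

definition C1 :: "(nat \<Rightarrow> nat \<Rightarrow> real) \<Rightarrow> bool" where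
  "C1 lam \<longleftrightarrow> (\<exists>\<mu> \<nu> \<alpha>1. \<mu> > 0 \<and> \<nu> > 1 \<and> \<alpha>1 > 0 \<and>
      (\<lambda>N. mu_N lam N - \<mu>) \<in> O(\<lambda>N. real N powr (- \<alpha>1)) \<and>
      (\<lambda>N. nu_N lam N - \<nu>) \<in> O(\<lambda>N. real N powr (- \<alpha>1)))"

definition cap_pmf :: "(nat \<Rightarrow> nat \<Rightarrow> real) \<Rightarrow> nat \<Rightarrow> nat pmf" where
  "cap_pmf lam N = embed_pmf (\<lambda>m. if m \<in> {1..N} then lam N m / l_N lam N else 0)"

text \<open>Joint law of (M_0, ..., M_v): M_0 uniform on {1..N}, M_1..M_v i.i.d. cap_pmf,
  all independent (product measure). Coordinates outside {0..v} are fixed to 0.\<close>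
definition M_pmf :: "(nat \<Rightarrow> nat \<Rightarrow> real) \<Rightarrow> nat \<Rightarrow> nat \<Rightarrow> (nat \<Rightarrow> nat) pmf" where
  "M_pmf lam N v = Pi_pmf {0..v} 0
     (\<lambda>w. if w = 0 then pmf_of_set {1..N} else cap_pmf lam N)"

definition Y :: "(nat \<Rightarrow> nat) \<Rightarrow> nat \<Rightarrow> real" where
  "Y M w = (if \<exists>w'<w. M w = M w' then 1 else 0)"

end

theory Submission imports Defs begin

lemma pmf_cap:
  assumes pos: "\<And>i. 1 \<le> i \<Longrightarrow> i \<le> N \<Longrightarrow> lam N i > 0" and N: "N \<ge> 1"
  shows "pmf (cap_pmf lam N) m = (if m \<in> {1..N} then lam N m / l_N lam N else 0)"
  unfolding cap_pmf_def
proof (rule pmf_embed_pmf)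
  have lpos: "l_N lam N > 0" unfolding l_N_def
    using N pos by (intro sum_pos) auto
  show "\<And>x. 0 \<le> (if x \<in> {1..N} then lam N x / l_N lam N else 0)"
    using lpos pos by (auto intro!: divide_nonneg_pos less_imp_le)
  have "(\<integral>\<^sup>+x. ennreal (if x \<in> {1..N} then lam N x / l_N lam N else 0) \<partial>count_space UNIV)
     = (\<Sum>x\<in>{1..N}. ennreal (if x \<in> {1..N} then lam N x / l_N lam N else 0))"
    by (rule nn_integral_count_space') auto
  also have "\<dots> = ennreal (\<Sum>x\<in>{1..N}. lam N x / l_N lam N)"
    using lpos pos by (subst sum_ennreal) (auto intro!: divide_nonneg_pos less_imp_le)
  also have "(\<Sum>x\<in>{1..N}. lam N x / l_N lam N) = 1"
    using lpos by (simp add: sum_divide_distrib[symmetric] l_N_def)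
  finally show "(\<integral>\<^sup>+x. ennreal (if x \<in> {1..N} then lam N x / l_N lam N else 0) \<partial>count_space UNIV) = 1"
    by simp
qed

lemma set_cap:
  assumes pos: "\<And>i. 1 \<le> i \<Longrightarrow> i \<le> N \<Longrightarrow> lam N i > 0" and N: "N \<ge> 1"
  shows "set_pmf (cap_pmf lam N) \<subseteq> {1..N}"
  using pmf_cap[of N lam, OF assms] by (auto simp: set_pmf_eq split: if_splits)

lemma Pi_pair:
  assumes "finite A" "w \<in> A" "w' \<in> A" "w \<noteq> w'"
  shows "map_pmf (\<lambda>f. (f w, f w')) (Pi_pmf A d p) = pair_pmf (p w) (p w')"
proof -
  have A: "A = insert w (A - {w})" using assms by auto
  have "Pi_pmf A d p = map_pmf (\<lambda>(y,f). f(w:=y)) (pair_pmf (p w) (Pi_pmf (A - {w}) d p))"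
    by (subst A, rule Pi_pmf_insert) (use assms in auto)
  hence "map_pmf (\<lambda>f. (f w, f w')) (Pi_pmf A d p)
      = map_pmf (\<lambda>(a, b). (id a, b w')) (pair_pmf (p w) (Pi_pmf (A - {w}) d p))"
    using assms by (simp add: map_pmf_comp case_prod_unfold)
  also have "\<dots> = pair_pmf (map_pmf id (p w)) (map_pmf (\<lambda>f. f w') (Pi_pmf (A - {w}) d p))"
    by (rule map_pair)
  also have "map_pmf (\<lambda>f. f w') (Pi_pmf (A - {w}) d p) = p w'"
    using assms by (subst Pi_pmf_component) auto
  finally show ?thesis by simp
qed

lemma Pi_eq_bound:
  assumes "finite A" "w \<in> A" "w' \<in> A" "w \<noteq> w'" "set_pmf (p w) \<subseteq> S" "finite S"
  shows "measure_pmf.prob (Pi_pmf A d p) {f. f w = f w'} \<le> (\<Sum>m\<in>S. pmf (p w) m * pmf (p w') m)"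
proof -
  have "measure_pmf.prob (Pi_pmf A d p) {f. f w = f w'}
      = measure_pmf.prob (map_pmf (\<lambda>f. (f w, f w')) (Pi_pmf A d p)) {(a,b). a = b}"
    by (simp add: vimage_def)
  also have "\<dots> = measure_pmf.prob (pair_pmf (p w) (p w')) {(a,b). a = b}"
    by (subst Pi_pair[OF assms(1-4)]) (rule refl)
  also have "\<dots> = measure_pmf.prob (pair_pmf (p w) (p w')) ({(a,b). a = b} \<inter> set_pmf (pair_pmf (p w) (p w')))"
    by (rule measure_Int_set_pmf[symmetric])
  also have "\<dots> \<le> measure_pmf.prob (pair_pmf (p w) (p w')) ((\<lambda>m. (m,m)) ` S)"
    using assms(5) by (intro measure_pmf.finite_measure_mono) auto
  also have "\<dots> = (\<Sum>m\<in>S. pmf (p w) m * pmf (p w') m)"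
    using assms(6) by (simp add: measure_measure_pmf_finite sum.reindex inj_on_def pmf_pair)
  finally show ?thesis .
qed

lemma pair_bound:
  assumes pos: "\<And>i. 1 \<le> i \<Longrightarrow> i \<le> N \<Longrightarrow> lam N i > 0" and N: "N \<ge> 1"
    and ww: "w' < w" "w \<le> v"
  shows "measure_pmf.prob (M_pmf lam N v) {f. f w = f w'}
     \<le> max (1 / real N) ((\<Sum>i=1..N. (lam N i)\<^sup>2) / (l_N lam N)\<^sup>2)"
proof -
  define p where "p = (\<lambda>x::nat. if x = 0 then pmf_of_set {1..N} else cap_pmf lam N)"
  have w0: "w \<noteq> 0" using ww by auto
  have "measure_pmf.prob (M_pmf lam N v) {f. f w = f w'} \<le> (\<Sum>m\<in>{1..N}. pmf (p w) m * pmf (p w') m)"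
    unfolding M_pmf_def p_def[symmetric]
    by (rule Pi_eq_bound) (use ww w0 set_cap[of N lam, OF pos N] in \<open>auto simp: p_def\<close>)
  also have "\<dots> \<le> max (1 / real N) ((\<Sum>i=1..N. (lam N i)\<^sup>2) / (l_N lam N)\<^sup>2)"
  proof (cases "w' = 0")
    case True
    have "(\<Sum>m\<in>{1..N}. pmf (p w) m * pmf (p w') m) = (\<Sum>m\<in>{1..N}. lam N m / l_N lam N * (1 / real N))"
      using True w0 N by (intro sum.cong) (auto simp: p_def pmf_cap[of N lam, OF pos N])
    also have "\<dots> = (\<Sum>m\<in>{1..N}. lam N m) / l_N lam N * (1 / real N)"
      by (simp add: sum_divide_distrib[symmetric] sum_distrib_right[symmetric])
    also have "\<dots> = 1 / real N"
    proof -
      have "l_N lam N > 0" unfolding l_N_def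
        using N pos by (intro sum_pos) auto
      thus ?thesis by (simp add: l_N_def)
    qed
    finally show ?thesis by simp
  next
    case False
    have "(\<Sum>m\<in>{1..N}. pmf (p w) m * pmf (p w') m) = (\<Sum>m\<in>{1..N}. (lam N m)\<^sup>2 / (l_N lam N)\<^sup>2)"
      using False w0 N by (intro sum.cong) (auto simp: p_def pmf_cap[of N lam, OF pos N] power2_eq_square)
    also have "\<dots> = (\<Sum>i=1..N. (lam N i)\<^sup>2) / (l_N lam N)\<^sup>2"
      by (simp add: sum_divide_distrib[symmetric])
    finally show ?thesis by simp
  qed
  finally show ?thesis .
qed

lemma finite_M:
  assumes pos: "\<And>i. 1 \<le> i \<Longrightarrow> i \<le> N \<Longrightarrow> lam N i > 0" and N: "N \<ge> 1"
  shows "finite (set_pmf (M_pmf lam N v))"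
proof -
  have "finite (set_pmf (cap_pmf lam N))" by (rule finite_subset[OF set_cap[of N lam, OF pos N]]) auto
  thus ?thesis unfolding M_pmf_def
    by (subst set_Pi_pmf) (use N in \<open>auto intro!: finite_PiE_dflt\<close>)
qed

lemma markov_N:
  assumes pos: "\<And>i. 1 \<le> i \<Longrightarrow> i \<le> N \<Longrightarrow> lam N i > 0" and N: "N \<ge> 1" and a: "a > 0"
  defines "B \<equiv> max (1 / real N) ((\<Sum>i=1..N. (lam N i)\<^sup>2) / (l_N lam N)\<^sup>2)"
  shows "measure_pmf.prob (M_pmf lam N v) {M. (\<Sum>w=1..v. Y M w) \<ge> a} \<le> (real v)\<^sup>2 * B / a"
proof -
  let ?P = "M_pmf lam N v"
  define T where "T = (\<lambda>f. (\<Sum>w=1..v. \<Sum>w'<w. indicator {f::nat\<Rightarrow>nat. f w = f w'} f) :: real)"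
  have YT: "(\<Sum>w=1..v. Y M w) \<le> T M" for M
    unfolding T_def
  proof (rule sum_mono)
    fix w assume "w \<in> {1..v}"
    show "Y M w \<le> (\<Sum>w'<w. indicator {f::nat\<Rightarrow>nat. f w = f w'} M)"
    proof (cases "\<exists>w'<w. M w = M w'")
      case True
      then obtain w' where "w' < w" "M w = M w'" by auto
      hence "indicator {f::nat\<Rightarrow>nat. f w = f w'} M \<le> (\<Sum>w'<w. indicator {f::nat\<Rightarrow>nat. f w = f w'} M :: real)"
        by (intro member_le_sum) auto
      thus ?thesis using True \<open>M w = M w'\<close> by (simp add: Y_def)
    qed (auto simp: Y_def intro: sum_nonneg)
  qed
  have fin: "finite (set_pmf ?P)" by (rule finite_M[of N lam, OF pos N])
  have "measure_pmf.prob ?P {M. (\<Sum>w=1..v. Y M w) \<ge> a} \<le> measure_pmf.prob ?P {M \<in> space ?P. T M \<ge> a}"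
    using YT by (intro measure_pmf.finite_measure_mono) (auto intro: order.trans)
  also have "\<dots> \<le> (\<integral>x. T x \<partial>?P) / a"
    by (rule integral_Markov_inequality_measure[where A = UNIV])
      (use a fin in \<open>auto simp: T_def intro!: integrable_measure_pmf_finite sum_nonneg\<close>)
  also have "(\<integral>x. T x \<partial>?P) = (\<Sum>w=1..v. \<Sum>w'<w. measure_pmf.prob ?P {f. f w = f w'})"
    unfolding T_def
    by (subst Bochner_Integration.integral_sum, use fin in \<open>auto intro!: integrable_measure_pmf_finite\<close>)+
  also have "\<dots> \<le> (\<Sum>w=1..v. \<Sum>w'<w. B)"
    unfolding B_def by (intro sum_mono pair_bound[of N lam, OF pos N]) auto
  also have "\<dots> = (\<Sum>w=1..v. real w) * B"
    by (simp add: sum_distrib_right)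
  also have "\<dots> \<le> (real v)\<^sup>2 * B"
  proof (rule mult_right_mono)
    have "(\<Sum>w=1..v. real w) \<le> (\<Sum>w=1..v. real v)" by (intro sum_mono) auto
    thus "(\<Sum>w=1..v. real w) \<le> (real v)\<^sup>2" by (simp add: power2_eq_square)
    show "0 \<le> B" unfolding B_def by (simp add: le_max_iff_disj)
  qed
  finally show ?thesis using a by (simp add: divide_right_mono)
qed

lemma bigo_small:
  fixes f :: "nat \<Rightarrow> real"
  assumes "f \<in> O(\<lambda>N. real N powr (- \<alpha>))" "\<alpha> > 0" "e > 0"
  shows "eventually (\<lambda>N. \<bar>f N\<bar> \<le> e) sequentially"
proof -
  obtain c where c: "c > 0" "eventually (\<lambda>N. norm (f N) \<le> c * norm (real N powr (- \<alpha>))) sequentially"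
    using assms(1) by (elim landau_o.bigE) auto
  have "((\<lambda>N. c * real N powr (- \<alpha>)) \<longlongrightarrow> c * 0) sequentially"
    by (intro tendsto_mult tendsto_const tendsto_neg_powr filterlim_real_sequentially) (use assms in auto)
  hence "eventually (\<lambda>N. c * real N powr (- \<alpha>) < e) sequentially"
    using assms(3) by (intro order_tendstoD) auto
  thus ?thesis using c(2) by eventually_elim auto
qed

theorem lemmaD3:
  fixes lam :: "nat \<Rightarrow> nat \<Rightarrow> real"
  assumes pos: "\<And>N i. 1 \<le> i \<Longrightarrow> i \<le> N \<Longrightarrow> lam N i > 0"
    and C1: "C1 lam"
  shows "\<forall>\<delta> u. -1/2 < \<delta> \<and> \<delta> < 1/2 \<and> u \<ge> 0 \<longrightarrow>
    (\<exists>C N0. \<forall>N\<ge>N0. \<forall>v::nat. real v \<le> real N powr (1/2 + \<delta>) \<longrightarrow>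
        measure_pmf.prob (M_pmf lam N v) {M. (\<Sum>w=1..v. Y M w) \<ge> real N powr u}
          \<le> C * real N powr (- (u - 2 * \<delta>)))"
proof -
  obtain \<mu> \<nu> \<alpha> where mn: "\<mu> > 0" "\<nu> > 1" "\<alpha> > 0"
    "(\<lambda>N. mu_N lam N - \<mu>) \<in> O(\<lambda>N. real N powr (- \<alpha>))"
    "(\<lambda>N. nu_N lam N - \<nu>) \<in> O(\<lambda>N. real N powr (- \<alpha>))"
    using C1 unfolding C1_def by blast
  have "eventually (\<lambda>N. \<bar>mu_N lam N - \<mu>\<bar> \<le> \<mu>/2 \<and> \<bar>nu_N lam N - \<nu>\<bar> \<le> 1 \<and> N \<ge> 1) sequentially"
    using bigo_small[OF mn(4) mn(3), of "\<mu>/2"] bigo_small[OF mn(5) mn(3), of 1] mn(1)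
      eventually_ge_at_top[of "1::nat"] eventually_conj
    by (smt (verit, del_insts) eventually_elim2 half_gt_zero)
  then obtain N1 where N1: "\<And>N. N \<ge> N1 \<Longrightarrow> \<bar>mu_N lam N - \<mu>\<bar> \<le> \<mu>/2 \<and> \<bar>nu_N lam N - \<nu>\<bar> \<le> 1 \<and> N \<ge> 1"
    unfolding eventually_sequentially by blast
  define K where "K = 1 + 2 * (\<nu> + 1) / \<mu>"
  have K0: "K \<ge> 0" unfolding K_def using mn by auto
  have Bb: "max (1 / real N) ((\<Sum>i=1..N. (lam N i)\<^sup>2) / (l_N lam N)\<^sup>2) \<le> K / real N"
    if N: "N \<ge> N1" for N
  proof -
    have h: "\<bar>mu_N lam N - \<mu>\<bar> \<le> \<mu>/2" "\<bar>nu_N lam N - \<nu>\<bar> \<le> 1" "N \<ge> 1" using N1[OF N] by auto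
    have lpos: "l_N lam N > 0" unfolding l_N_def
      using h(3) pos by (intro sum_pos) auto
    have l: "l_N lam N = mu_N lam N * real N" using h(3) by (simp add: mu_N_def)
    have mpos: "mu_N lam N \<ge> \<mu>/2" using h(1) unfolding abs_le_iff by linarith
    have "(\<Sum>i=1..N. (lam N i)\<^sup>2) / (l_N lam N)\<^sup>2 = nu_N lam N / (mu_N lam N * real N)"
      using lpos l by (simp add: nu_N_def power2_eq_square)
    also have "\<dots> \<le> (\<nu> + 1) / (\<mu> / 2 * real N)"
      using h mpos mn(1,2) by (intro frac_le mult_right_mono mult_pos_pos) auto
    also have "\<dots> = 2 * (\<nu> + 1) / \<mu> / real N" by (simp add: field_simps)
    also have "\<dots> \<le> K / real N" unfolding K_def by (intro divide_right_mono) auto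
    finally have 1: "(\<Sum>i=1..N. (lam N i)\<^sup>2) / (l_N lam N)\<^sup>2 \<le> K / real N" .
    have 2: "1 / real N \<le> K / real N" unfolding K_def using mn by (intro divide_right_mono) auto
    show ?thesis using 1 2 by simp
  qed
  show ?thesis
  proof (intro allI impI exI[of _ K] exI[of _ N1])
    fix \<delta> u :: real and N v
    assume du: "-1/2 < \<delta> \<and> \<delta> < 1/2 \<and> u \<ge> 0" and N: "N \<ge> N1"
      and v: "real v \<le> real N powr (1/2 + \<delta>)"
    have N1': "N \<ge> 1" using N1[OF N] by auto
    hence Npos: "real N > 0" by auto
    have "measure_pmf.prob (M_pmf lam N v) {M. (\<Sum>w=1..v. Y M w) \<ge> real N powr u}
        \<le> (real v)\<^sup>2 * max (1 / real N) ((\<Sum>i=1..N. (lam N i)\<^sup>2) / (l_N lam N)\<^sup>2) / real N powr u"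
      by (rule markov_N[of N lam]) (use pos N1' Npos in auto)
    also have "\<dots> \<le> (real N powr (1/2 + \<delta>))\<^sup>2 * (K / real N) / real N powr u"
      using Bb[OF N] v Npos
      by (intro divide_right_mono mult_mono power_mono) (auto simp: le_max_iff_disj)
    also have "(real N powr (1/2 + \<delta>))\<^sup>2 = real N powr (1 + 2 * \<delta>)"
      using Npos by (simp add: powr_powr[symmetric] power2_eq_square powr_add[symmetric])
    also have "real N powr (1 + 2 * \<delta>) * (K / real N) / real N powr u = K * real N powr (- (u - 2 * \<delta>))"
    proof -
      have "real N powr (1 + 2 * \<delta>) = real N * real N powr (2 * \<delta>)"
        using Npos by (simp add: powr_add)
      moreover have "real N powr (- (u - 2 * \<delta>)) = real N powr (2 * \<delta>) / real N powr u"
        using Npos by (simp add: powr_diff[symmetric])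
      ultimately show ?thesis using Npos by (simp add: field_simps)
    qed
    finally show "measure_pmf.prob (M_pmf lam N v) {M. (\<Sum>w=1..v. Y M w) \<ge> real N powr u}
          \<le> K * real N powr (- (u - 2 * \<delta>))" .
  qed
qed

end
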